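(* Let $P=\langle \mathit{Init}(X),\mathit{Tr}(X,X'),\mathit{Bad}(X)\rangle$ be a safety problem over $\mathcal{T}$, and suppose the Quic3 rules are applied to $P$ in any order starting from the initial state. Then in every step of Quic3, for every $k<N$, the sequence $\forall Q_1,\dots,\forall Q_k$ is an interpolation sequence of length $k$ for $P$.
   Context: $\mathcal{T}$ is the combined first-order theory of linear integer arithmetic and arrays, with sorts $\mathsf{int}$ and $\mathsf{array}$ (array indices and values have sort $\mathsf{int}$; $\mathsf{sel}$, $\mathit{store}$ are array read/write). Formulas may contain uninterpreted constants; among them are Skolem constants $\mathit{SK}=\{sk_i: i\in\mathbb{N}\}$ of sort $\mathsf{int}$. Variables of sort $\mathsf{int}$ are named $v_i$. A substitution is a partial sort-respecting map from variables to terms; $\varphi\sigma$ is its application; $\emptyset$ is the empty substitution. The Skolem substitution $\mathit{sk}$ maps $v_i\mapsto sk_i$; $L_{\mathit{sk}}$ denotes $L\,\mathit{sk}$. $\mathit{Const}(\varphi)$, $\mathit{FVars}(\varphi)$ denote uninterpreted constants and free variables; $\forall\varphi$ / $\exists\varphi$ are universal / existential closures over all free variables; $\varphi\Rightarrow\psi$ means $\varphi\to\psi$ is valid in $\mathcal{T}$. For a set $U$ of constants and formula $\varphi$, $\mathit{abs}(U,\varphi)=(\psi,\sigma)$: $\psi$ is obtained from $\varphi$ by replacing each constant of $U$ by a variable not free in $\varphi$, each $sk_i\in U$ being replaced by $v_i$; $\mathit{dom}(\sigma)=\mathit{FVars}(\psi)\setminus\mathit{FVars}(\varphi)$, $\psi\sigma=\varphi$,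 and no constant of $U$ occurs in $\psi$. For ground $\varphi$, $\exists U\cdot\varphi$ denotes $\exists\psi$ with $(\psi,\_)=\mathit{abs}(U,\varphi)$. A partial model-based projection $\textsc{pMbp}(U,\varphi,M)=(\psi,W)$ (for ground $\varphi$, $M\models\varphi$, $U\subseteq\mathit{Const}(\varphi)$) satisfies: $\psi$ is a conjunction of ground literals; $W\subseteq U$, $\mathit{Const}(\psi)\subseteq\mathit{Const}(\varphi)\setminus(U\setminus W)$; $\psi\Rightarrow\exists(U\setminus W)\cdot\varphi$; $M\models\psi$; for fixed $U,\varphi$ only finitely many values arise over all models $M$; $W$ contains no array constant. For ground $A,B$ with $A\wedge B$ unsatisfiable, $\textsc{Itp}(A,B)$ is an interpolant: a ground formula $I$ with $\mathit{Const}(I)\subseteq\mathit{Const}(A)\cap\mathit{Const}(B)$, $A\Rightarrow I$ and $I\Rightarrow\neg B$. A safety problem $\langle \mathit{Init}(X),\mathit{Tr}(X,X'),\mathit{Bad}(X)\rangle$ has a finite set $X$ of constants disjoint from $\mathit{SK}$, primed copy $X'=\{a'\mid a\in X\}$, and quantifier-free ground $\mathit{Init},\mathit{Bad}$ over $X$ and $\mathit{Tr}$ over $X\cup X'$. $\varphi'$ replaces each $a\in X$ by $a'$ in $\varphi$, and for $L'$ a formula over $X'\cup\mathit{SK}$, $L$ denotes its unprimed version. $\mathcal{F}(A)=(A(X)\wedge\mathit{Tr}(X,X'))\vee\mathit{Init}(X')$. An interpolation sequence of length $k$ for $P$ is a sequence of formulas $I_1(X),\dots,I_k(X)$ with $\mathit{Init}(X)\Rightarrow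 I_1(X)$, $I_j(X)\wedge\mathit{Tr}(X,X')\Rightarrow I_{j+1}(X')$ for $1\le j\le k-1$, and $I_k(X)\Rightarrow\neg\mathit{Bad}(X)$. A frame $Q$ is a finite set of pairs $(\ell,\sigma)$, $\ell$ quantifier-free over $X$ with free variables of sort $\mathsf{int}$, $\sigma$ a substitution with $\mathit{FVars}(\ell)\subseteq\mathit{dom}(\sigma)$ and range in $X'\cup\mathit{SK}$; $\forall Q$ is the set (read as conjunction) of $\forall\ell$ and $\mathit{qi}(Q)$ the conjunction of $\ell\sigma$ over $(\ell,\sigma)\in Q$. A proof obligation (POB) is $\langle m,\sigma,i\rangle$ with $m$ a conjunction of literals over $X$ with free $\mathsf{int}$ variables, $m\sigma$ ground, $i\in\mathbb N$. Quic3 maintains a POB queue $\mathcal Q$, a level $N$ and frames $Q_0,Q_1,\dots$; initially $\mathcal Q=\emptyset$, $N=0$, $Q_0=\{(\mathit{Init},\emptyset)\}$, $Q_i=\emptyset$ for $i>0$. It applies, in any order, the rules: (Safe) if some $i<N$ has $\forall Q_i\subseteq\forall Q_{i+1}$, return Safe; (Cex) if some $\langle m,\sigma,0\rangle\in\mathcal Q$, return Cex; (Unfold) if $\mathit{qi}(Q_N)\Rightarrow\neg\mathit{Bad}$, set $N\gets N+1$; (Candidate) if $m$ is a monomial with $m\Rightarrow\mathit{qi}(Q_N)\wedge\mathit{Bad}$, add $\langle m,\emptyset,N\rangle$ to $\mathcal Q$; (Predecessor) if $\langle m,\xi,i+1\rangle\in\mathcal Q$ and $M\models\mathit{qi}(Q_i)\wedge\mathit{Tr}\wedge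 m'_{\mathit{sk}}$, add $\langle\psi,\sigma,i\rangle$ where $(\psi,\sigma)=\mathit{abs}(U,\varphi)$ and $(\varphi,U)=\textsc{pMbp}(X'\cup\mathit{SK},\mathit{Tr}\wedge m'_{\mathit{sk}},M)$; (NewLemma) for $0\le i<N$ and $\langle m,\sigma,i+1\rangle\in\mathcal Q$ with $\mathcal F(\mathit{qi}(Q_i))\wedge m'_{\mathit{sk}}$ unsatisfiable, let $L'=\textsc{Itp}(\mathcal F(\mathit{qi}(Q_i)),m'_{\mathit{sk}})$ and $(\ell,\_)=\mathit{abs}(\mathit{SK},L)$, and add $(\ell,\sigma)$ to $Q_j$ for all $j\le i+1$; (Push) for $0\le i<N$ and $((\varphi\vee\psi),\sigma)\in Q_i$, if $(\varphi,\sigma)\notin Q_{i+1}$, $\mathit{Init}\Rightarrow\forall\varphi$ and $(\forall\varphi)\wedge\forall Q_i\wedge\mathit{qi}(Q_i)\wedge\mathit{Tr}\Rightarrow\forall\varphi'$, add $(\varphi,\sigma)$ to $Q_j$ for all $j\le i+1$. *)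

theory Defs
  imports Main
begin

section \<open>Syntax of the combined theory T (linear integer arithmetic + arrays)\<close>

datatype srt = SInt | SArr

datatype var = IV nat | AV nat

text \<open>Uninterpreted constants: unprimed constants (Cn), their primed copies (Pr),
  and the Skolem constants sk_i (Sk i, sort int).\<close>
datatype cnst = Cn srt nat | Pr srt nat | Sk nat

datatype trm =
    Var var | Cst cnst | Num int | Add trm trm | Scale int trm
  | Sel trm trm | Store trm trm trm

datatype fm =
    TT | FF | Le trm trm | Lt trm trm | Eq trm trm
  | Neg fm | And fm fm | Or fm fm | Imp fm fm | All var fm | Ex var fm

type_synonym subst = "var \<Rightarrow> trm option"

fun vsort :: "var \<Rightarrow> srt" where
  "vsort (IV _) = SInt" | "vsort (AV _) = SArr"

fun csort :: "cnst \<Rightarrow> srt" where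
  "csort (Cn s _) = s" | "csort (Pr s _) = s" | "csort (Sk _) = SInt"

fun wt :: "trm \<Rightarrow> srt \<Rightarrow> bool" where
  "wt (Var v) s = (vsort v = s)"
| "wt (Cst c) s = (csort c = s)"
| "wt (Num _) s = (s = SInt)"
| "wt (Add a b) s = (s = SInt \<and> wt a SInt \<and> wt b SInt)"
| "wt (Scale _ a) s = (s = SInt \<and> wt a SInt)"
| "wt (Sel a i) s = (s = SInt \<and> wt a SArr \<and> wt i SInt)"
| "wt (Store a i x) s = (s = SArr \<and> wt a SArr \<and> wt i SInt \<and> wt x SInt)"

fun wff :: "fm \<Rightarrow> bool" where
  "wff TT = True" | "wff FF = True"
| "wff (Le a b) = (wt a SInt \<and> wt b SInt)"
| "wff (Lt a b) = (wt a SInt \<and> wt b SInt)"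
| "wff (Eq a b) = (\<exists>s. wt a s \<and> wt b s)"
| "wff (Neg p) = wff p"
| "wff (And p q) = (wff p \<and> wff q)"
| "wff (Or p q) = (wff p \<and> wff q)"
| "wff (Imp p q) = (wff p \<and> wff q)"
| "wff (All _ p) = wff p"
| "wff (Ex _ p) = wff p"

fun fvt :: "trm \<Rightarrow> var set" where
  "fvt (Var v) = {v}" | "fvt (Cst _) = {}" | "fvt (Num _) = {}"
| "fvt (Add a b) = fvt a \<union> fvt b" | "fvt (Scale _ a) = fvt a"
| "fvt (Sel a i) = fvt a \<union> fvt i" | "fvt (Store a i x) = fvt a \<union> fvt i \<union> fvt x"

fun fv :: "fm \<Rightarrow> var set" where
  "fv TT = {}" | "fv FF = {}"
| "fv (Le a b) = fvt a \<union> fvt b" | "fv (Lt a b) = fvt a \<union> fvt b"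
| "fv (Eq a b) = fvt a \<union> fvt b"
| "fv (Neg p) = fv p" | "fv (And p q) = fv p \<union> fv q"
| "fv (Or p q) = fv p \<union> fv q" | "fv (Imp p q) = fv p \<union> fv q"
| "fv (All v p) = fv p - {v}" | "fv (Ex v p) = fv p - {v}"

fun ct :: "trm \<Rightarrow> cnst set" where
  "ct (Var _) = {}" | "ct (Cst c) = {c}" | "ct (Num _) = {}"
| "ct (Add a b) = ct a \<union> ct b" | "ct (Scale _ a) = ct a"
| "ct (Sel a i) = ct a \<union> ct i" | "ct (Store a i x) = ct a \<union> ct i \<union> ct x"

fun cf :: "fm \<Rightarrow> cnst set" where
  "cf TT = {}" | "cf FF = {}"
| "cf (Le a b) = ct a \<union> ct b" | "cf (Lt a b) = ct a \<union> ct b"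
| "cf (Eq a b) = ct a \<union> ct b"
| "cf (Neg p) = cf p" | "cf (And p q) = cf p \<union> cf q"
| "cf (Or p q) = cf p \<union> cf q" | "cf (Imp p q) = cf p \<union> cf q"
| "cf (All _ p) = cf p" | "cf (Ex _ p) = cf p"

fun qfree :: "fm \<Rightarrow> bool" where
  "qfree (All _ _) = False" | "qfree (Ex _ _) = False"
| "qfree (Neg p) = qfree p" | "qfree (And p q) = (qfree p \<and> qfree q)"
| "qfree (Or p q) = (qfree p \<and> qfree q)" | "qfree (Imp p q) = (qfree p \<and> qfree q)"
| "qfree _ = True"

definition fm_ground :: "fm \<Rightarrow> bool" where
  "fm_ground p \<longleftrightarrow> qfree p \<and> fv p = {}"

fun is_atom :: "fm \<Rightarrow> bool" where
  "is_atom (Le _ _) = True" | "is_atom (Lt _ _) = True" | "is_atom (Eq _ _) = True"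
| "is_atom _ = False"

fun is_literal :: "fm \<Rightarrow> bool" where
  "is_literal (Neg p) = is_atom p" | "is_literal p = is_atom p"

definition monomial :: "fm \<Rightarrow> bool" where
  "monomial m \<longleftrightarrow> (\<exists>ls. list_all is_literal ls \<and> m = foldr And ls TT)"

fun substt :: "subst \<Rightarrow> trm \<Rightarrow> trm" where
  "substt \<sigma> (Var v) = (case \<sigma> v of Some t \<Rightarrow> t | None \<Rightarrow> Var v)"
| "substt \<sigma> (Cst c) = Cst c" | "substt \<sigma> (Num n) = Num n"
| "substt \<sigma> (Add a b) = Add (substt \<sigma> a) (substt \<sigma> b)"
| "substt \<sigma> (Scale k a) = Scale k (substt \<sigma> a)"
| "substt \<sigma> (Sel a i) = Sel (substt \<sigma> a) (substt \<sigma> i)"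
| "substt \<sigma> (Store a i x) = Store (substt \<sigma> a) (substt \<sigma> i) (substt \<sigma> x)"

fun subst :: "subst \<Rightarrow> fm \<Rightarrow> fm" where
  "subst \<sigma> TT = TT" | "subst \<sigma> FF = FF"
| "subst \<sigma> (Le a b) = Le (substt \<sigma> a) (substt \<sigma> b)"
| "subst \<sigma> (Lt a b) = Lt (substt \<sigma> a) (substt \<sigma> b)"
| "subst \<sigma> (Eq a b) = Eq (substt \<sigma> a) (substt \<sigma> b)"
| "subst \<sigma> (Neg p) = Neg (subst \<sigma> p)"
| "subst \<sigma> (And p q) = And (subst \<sigma> p) (subst \<sigma> q)"
| "subst \<sigma> (Or p q) = Or (subst \<sigma> p) (subst \<sigma> q)"
| "subst \<sigma> (Imp p q) = Imp (subst \<sigma> p) (subst \<sigma> q)"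
| "subst \<sigma> (All v p) = All v (subst (\<sigma>(v := None)) p)"
| "subst \<sigma> (Ex v p) = Ex v (subst (\<sigma>(v := None)) p)"

fun mapct :: "(cnst \<Rightarrow> cnst) \<Rightarrow> trm \<Rightarrow> trm" where
  "mapct f (Var v) = Var v" | "mapct f (Cst c) = Cst (f c)" | "mapct f (Num n) = Num n"
| "mapct f (Add a b) = Add (mapct f a) (mapct f b)"
| "mapct f (Scale k a) = Scale k (mapct f a)"
| "mapct f (Sel a i) = Sel (mapct f a) (mapct f i)"
| "mapct f (Store a i x) = Store (mapct f a) (mapct f i) (mapct f x)"

fun mapcf :: "(cnst \<Rightarrow> cnst) \<Rightarrow> fm \<Rightarrow> fm" where
  "mapcf f TT = TT" | "mapcf f FF = FF"
| "mapcf f (Le a b) = Le (mapct f a) (mapct f b)"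
| "mapcf f (Lt a b) = Lt (mapct f a) (mapct f b)"
| "mapcf f (Eq a b) = Eq (mapct f a) (mapct f b)"
| "mapcf f (Neg p) = Neg (mapcf f p)"
| "mapcf f (And p q) = And (mapcf f p) (mapcf f q)"
| "mapcf f (Or p q) = Or (mapcf f p) (mapcf f q)"
| "mapcf f (Imp p q) = Imp (mapcf f p) (mapcf f q)"
| "mapcf f (All v p) = All v (mapcf f p)"
| "mapcf f (Ex v p) = Ex v (mapcf f p)"

fun primec :: "cnst \<Rightarrow> cnst" where
  "primec (Cn s n) = Pr s n" | "primec c = c"

fun unprimec :: "cnst \<Rightarrow> cnst" where
  "unprimec (Pr s n) = Cn s n" | "unprimec c = c"

definition prime :: "fm \<Rightarrow> fm" where "prime = mapcf primec"
definition unprime :: "fm \<Rightarrow> fm" where "unprime = mapcf unprimec"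

fun replt :: "(cnst \<Rightarrow> var option) \<Rightarrow> trm \<Rightarrow> trm" where
  "replt \<rho> (Var v) = Var v"
| "replt \<rho> (Cst c) = (case \<rho> c of Some v \<Rightarrow> Var v | None \<Rightarrow> Cst c)"
| "replt \<rho> (Num n) = Num n"
| "replt \<rho> (Add a b) = Add (replt \<rho> a) (replt \<rho> b)"
| "replt \<rho> (Scale k a) = Scale k (replt \<rho> a)"
| "replt \<rho> (Sel a i) = Sel (replt \<rho> a) (replt \<rho> i)"
| "replt \<rho> (Store a i x) = Store (replt \<rho> a) (replt \<rho> i) (replt \<rho> x)"

fun replf :: "(cnst \<Rightarrow> var option) \<Rightarrow> fm \<Rightarrow> fm" where
  "replf \<rho> TT = TT" | "replf \<rho> FF = FF"
| "replf \<rho> (Le a b) = Le (replt \<rho> a) (replt \<rho> b)"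
| "replf \<rho> (Lt a b) = Lt (replt \<rho> a) (replt \<rho> b)"
| "replf \<rho> (Eq a b) = Eq (replt \<rho> a) (replt \<rho> b)"
| "replf \<rho> (Neg p) = Neg (replf \<rho> p)"
| "replf \<rho> (And p q) = And (replf \<rho> p) (replf \<rho> q)"
| "replf \<rho> (Or p q) = Or (replf \<rho> p) (replf \<rho> q)"
| "replf \<rho> (Imp p q) = Imp (replf \<rho> p) (replf \<rho> q)"
| "replf \<rho> (All v p) = All v (replf \<rho> p)"
| "replf \<rho> (Ex v p) = Ex v (replf \<rho> p)"

definition sk :: subst where
  "sk v = (case v of IV i \<Rightarrow> Some (Cst (Sk i)) | AV _ \<Rightarrow> None)"

definition SKs :: "cnst set" where "SKs = range Sk"

definition is_abs :: "cnst set \<Rightarrow> fm \<Rightarrow> fm \<times> subst \<Rightarrow> bool" where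
  "is_abs U \<phi> r \<longleftrightarrow> (case r of (\<psi>, \<sigma>) \<Rightarrow>
     (\<exists>\<rho>. (\<forall>c\<in>U. vsort (\<rho> c) = csort c \<and> \<rho> c \<notin> fv \<phi>)
         \<and> (\<forall>i. Sk i \<in> U \<longrightarrow> \<rho> (Sk i) = IV i)
         \<and> \<psi> = replf (\<lambda>c. if c \<in> U then Some (\<rho> c) else None) \<phi>)
     \<and> dom \<sigma> = fv \<psi> - fv \<phi> \<and> subst \<sigma> \<psi> = \<phi> \<and> cf \<psi> \<inter> U = {})"

definition lst :: "'a set \<Rightarrow> 'a list" where
  "lst S = (SOME xs. set xs = S \<and> distinct xs)"

definition allc :: "fm \<Rightarrow> fm" where "allc p = foldr All (lst (fv p)) p"
definition exc :: "fm \<Rightarrow> fm" where "exc p = foldr Ex (lst (fv p)) p"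

definition conjs :: "fm set \<Rightarrow> fm" where "conjs S = foldr And (lst S) TT"

text \<open>exists U . phi, for ground phi, w.r.t. the abstraction function absf.\<close>
definition exq :: "(cnst set \<Rightarrow> fm \<Rightarrow> fm \<times> subst) \<Rightarrow> cnst set \<Rightarrow> fm \<Rightarrow> fm" where
  "exq absf U \<phi> = exc (fst (absf U \<phi>))"

section \<open>Semantics (standard model of T: integers, arrays = functions int => int)\<close>

datatype val = IVal int | AVal "int \<Rightarrow> int"

fun toint :: "val \<Rightarrow> int" where "toint (IVal n) = n" | "toint (AVal _) = 0"
fun toarr :: "val \<Rightarrow> int \<Rightarrow> int" where "toarr (AVal f) = f" | "toarr (IVal _) = (\<lambda>_. 0)"

fun hassort :: "val \<Rightarrow> srt \<Rightarrow> bool" where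
  "hassort (IVal _) s = (s = SInt)" | "hassort (AVal _) s = (s = SArr)"

fun evt :: "(cnst \<Rightarrow> val) \<Rightarrow> (var \<Rightarrow> val) \<Rightarrow> trm \<Rightarrow> val" where
  "evt M e (Var v) = e v" | "evt M e (Cst c) = M c" | "evt M e (Num n) = IVal n"
| "evt M e (Add a b) = IVal (toint (evt M e a) + toint (evt M e b))"
| "evt M e (Scale k a) = IVal (k * toint (evt M e a))"
| "evt M e (Sel a i) = IVal (toarr (evt M e a) (toint (evt M e i)))"
| "evt M e (Store a i x) =
     AVal ((toarr (evt M e a))(toint (evt M e i) := toint (evt M e x)))"

fun evf :: "(cnst \<Rightarrow> val) \<Rightarrow> (var \<Rightarrow> val) \<Rightarrow> fm \<Rightarrow> bool" where
  "evf M e TT = True" | "evf M e FF = False"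
| "evf M e (Le a b) = (toint (evt M e a) \<le> toint (evt M e b))"
| "evf M e (Lt a b) = (toint (evt M e a) < toint (evt M e b))"
| "evf M e (Eq a b) = (evt M e a = evt M e b)"
| "evf M e (Neg p) = (\<not> evf M e p)"
| "evf M e (And p q) = (evf M e p \<and> evf M e q)"
| "evf M e (Or p q) = (evf M e p \<or> evf M e q)"
| "evf M e (Imp p q) = (evf M e p \<longrightarrow> evf M e q)"
| "evf M e (All v p) = (\<forall>x. hassort x (vsort v) \<longrightarrow> evf M (e(v := x)) p)"
| "evf M e (Ex v p) = (\<exists>x. hassort x (vsort v) \<and> evf M (e(v := x)) p)"

definition wsM :: "(cnst \<Rightarrow> val) \<Rightarrow> bool" where "wsM M \<longleftrightarrow> (\<forall>c. hassort (M c) (csort c))"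
definition wsE :: "(var \<Rightarrow> val) \<Rightarrow> bool" where "wsE e \<longleftrightarrow> (\<forall>v. hassort (e v) (vsort v))"

definition T_valid :: "fm \<Rightarrow> bool" where
  "T_valid p \<longleftrightarrow> (\<forall>M e. wsM M \<longrightarrow> wsE e \<longrightarrow> evf M e p)"

definition T_unsat :: "fm \<Rightarrow> bool" where
  "T_unsat p \<longleftrightarrow> \<not> (\<exists>M e. wsM M \<and> wsE e \<and> evf M e p)"

definition T_models :: "(cnst \<Rightarrow> val) \<Rightarrow> fm \<Rightarrow> bool" where
  "T_models M p \<longleftrightarrow> (\<forall>e. wsE e \<longrightarrow> evf M e p)"

definition safety_problem :: "cnst set \<Rightarrow> fm \<Rightarrow> fm \<Rightarrow> fm \<Rightarrow> bool" where
  "safety_problem X Init Tr Bad \<longleftrightarrow>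
     finite X \<and> (\<forall>c\<in>X. \<exists>s n. c = Cn s n)
     \<and> fm_ground Init \<and> wff Init \<and> cf Init \<subseteq> X
     \<and> fm_ground Bad \<and> wff Bad \<and> cf Bad \<subseteq> X
     \<and> fm_ground Tr \<and> wff Tr \<and> cf Tr \<subseteq> X \<union> primec ` X"

definition abs_spec :: "(cnst set \<Rightarrow> fm \<Rightarrow> fm \<times> subst) \<Rightarrow> bool" where
  "abs_spec absf \<longleftrightarrow> (\<forall>U \<phi>. fm_ground \<phi> \<longrightarrow> is_abs U \<phi> (absf U \<phi>))"

text \<open>Partial model-based projection (None = no result produced).\<close>
definition pmbp_spec :: "(cnst set \<Rightarrow> fm \<Rightarrow> fm \<times> subst)
    \<Rightarrow> (cnst set \<Rightarrow> fm \<Rightarrow> (cnst \<Rightarrow> val) \<Rightarrow> (fm \<times> cnst set) option) \<Rightarrow> bool" where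
  "pmbp_spec absf pmbp \<longleftrightarrow>
     (\<forall>U \<phi> M. fm_ground \<phi> \<and> wsM M \<and> T_models M \<phi> \<longrightarrow>
        (case pmbp U \<phi> M of None \<Rightarrow> True
         | Some (\<psi>, W) \<Rightarrow> monomial \<psi> \<and> fm_ground \<psi> \<and> wff \<psi> \<and> W \<subseteq> U
             \<and> cf \<psi> \<subseteq> cf \<phi> - (U - W)
             \<and> T_valid (Imp \<psi> (exq absf (U - W) \<phi>))
             \<and> T_models M \<psi> \<and> (\<forall>c\<in>W. csort c = SInt)))
   \<and> (\<forall>U \<phi>. finite {r. \<exists>M. wsM M \<and> T_models M \<phi> \<and> pmbp U \<phi> M = Some r})"

definition itp_spec :: "(fm \<Rightarrow> fm \<Rightarrow> fm option) \<Rightarrow> bool" where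
  "itp_spec itp \<longleftrightarrow> (\<forall>A B. fm_ground A \<and> fm_ground B \<and> T_unsat (And A B) \<longrightarrow>
     (case itp A B of None \<Rightarrow> True
      | Some I \<Rightarrow> fm_ground I \<and> wff I \<and> cf I \<subseteq> cf A \<inter> cf B
                 \<and> T_valid (Imp A I) \<and> T_valid (Imp I (Neg B))))"

definition interp_seq :: "cnst set \<Rightarrow> fm \<Rightarrow> fm \<Rightarrow> fm \<Rightarrow> nat \<Rightarrow> (nat \<Rightarrow> fm) \<Rightarrow> bool" where
  "interp_seq X Init Tr Bad k I \<longleftrightarrow>
     (\<forall>j\<in>{1..k}. cf (I j) \<subseteq> X)
     \<and> T_valid (Imp Init (I 1))
     \<and> (\<forall>j. 1 \<le> j \<and> j \<le> k - 1 \<longrightarrow> T_valid (Imp (And (I j) Tr) (prime (I (Suc j)))))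
     \<and> T_valid (Imp (I k) (Neg Bad))"

type_synonym frame = "(fm \<times> subst) set"

definition qi :: "frame \<Rightarrow> fm" where
  "qi Q = conjs ((\<lambda>(l, \<sigma>). subst \<sigma> l) ` Q)"

definition forallQ :: "frame \<Rightarrow> fm set" where
  "forallQ Q = (\<lambda>(l, \<sigma>). allc l) ` Q"

definition Ftr :: "fm \<Rightarrow> fm \<Rightarrow> fm \<Rightarrow> fm" where
  "Ftr Init Tr A = Or (And A Tr) (prime Init)"

definition msk :: "fm \<Rightarrow> fm" where "msk m = subst sk (prime m)"

definition is_pob :: "cnst set \<Rightarrow> fm \<times> subst \<times> nat \<Rightarrow> bool" where
  "is_pob X p \<longleftrightarrow> (case p of (m, \<sigma>, i) \<Rightarrow>
     monomial m \<and> cf m \<subseteq> X \<and> (\<forall>v\<in>fv m. vsort v = SInt) \<and> fm_ground (subst \<sigma> m))"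

datatype status = Running | SafeRes | CexRes

record q3state =
  stat :: status
  pobs :: "(fm \<times> subst \<times> nat) set"
  lvl :: nat
  frm :: "nat \<Rightarrow> frame"

definition q3init :: "fm \<Rightarrow> q3state" where
  "q3init Init = \<lparr> stat = Running, pobs = {}, lvl = 0,
                   frm = (\<lambda>i. if i = 0 then {(Init, Map.empty)} else {}) \<rparr>"

definition addlem :: "q3state \<Rightarrow> nat \<Rightarrow> fm \<times> subst \<Rightarrow> q3state" where
  "addlem s i x = s\<lparr> frm := (\<lambda>j. if j \<le> Suc i then insert x (frm s j) else frm s j) \<rparr>"

inductive q3step :: "cnst set \<Rightarrow> fm \<Rightarrow> fm \<Rightarrow> fm \<Rightarrow> (cnst set \<Rightarrow> fm \<Rightarrow> fm \<times> subst)
    \<Rightarrow> (cnst set \<Rightarrow> fm \<Rightarrow> (cnst \<Rightarrow> val) \<Rightarrow> (fm \<times> cnst set) option)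
    \<Rightarrow> (fm \<Rightarrow> fm \<Rightarrow> fm option) \<Rightarrow> q3state \<Rightarrow> q3state \<Rightarrow> bool"
  for X Init Tr Bad absf pmbp itp where
  Safe: "\<lbrakk> stat s = Running; i < lvl s; forallQ (frm s i) \<subseteq> forallQ (frm s (Suc i)) \<rbrakk>
         \<Longrightarrow> q3step X Init Tr Bad absf pmbp itp s (s\<lparr> stat := SafeRes \<rparr>)"
| Cex: "\<lbrakk> stat s = Running; (m, \<sigma>, 0) \<in> pobs s \<rbrakk>
         \<Longrightarrow> q3step X Init Tr Bad absf pmbp itp s (s\<lparr> stat := CexRes \<rparr>)"
| Unfold: "\<lbrakk> stat s = Running; T_valid (Imp (qi (frm s (lvl s))) (Neg Bad)) \<rbrakk>
         \<Longrightarrow> q3step X Init Tr Bad absf pmbp itp s (s\<lparr> lvl := Suc (lvl s) \<rparr>)"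
| Candidate: "\<lbrakk> stat s = Running; is_pob X (m, Map.empty, lvl s); wff m;
               T_valid (Imp m (And (qi (frm s (lvl s))) Bad)) \<rbrakk>
         \<Longrightarrow> q3step X Init Tr Bad absf pmbp itp s
               (s\<lparr> pobs := insert (m, Map.empty, lvl s) (pobs s) \<rparr>)"
| Predecessor: "\<lbrakk> stat s = Running; (m, \<xi>, Suc i) \<in> pobs s; wsM M;
               T_models M (And (qi (frm s i)) (And Tr (msk m)));
               pmbp (primec ` X \<union> SKs) (And Tr (msk m)) M = Some (\<phi>, W);
               absf W \<phi> = (\<psi>, \<sigma>) \<rbrakk>
         \<Longrightarrow> q3step X Init Tr Bad absf pmbp itp s (s\<lparr> pobs := insert (\<psi>, \<sigma>, i) (pobs s) \<rparr>)"
| NewLemma: "\<lbrakk> stat s = Running; i < lvl s; (m, \<sigma>, Suc i) \<in> pobs s;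
               T_unsat (And (Ftr Init Tr (qi (frm s i))) (msk m));
               itp (Ftr Init Tr (qi (frm s i))) (msk m) = Some L';
               absf SKs (unprime L') = (l, \<tau>) \<rbrakk>
         \<Longrightarrow> q3step X Init Tr Bad absf pmbp itp s (addlem s i (l, \<sigma>))"
| Push: "\<lbrakk> stat s = Running; i < lvl s; (Or \<phi> \<psi>, \<sigma>) \<in> frm s i;
           (\<phi>, \<sigma>) \<notin> frm s (Suc i);
           T_valid (Imp Init (allc \<phi>));
           T_valid (Imp (And (allc \<phi>) (And (conjs (forallQ (frm s i))) (And (qi (frm s i)) Tr)))
                        (prime (allc \<phi>))) \<rbrakk>
         \<Longrightarrow> q3step X Init Tr Bad absf pmbp itp s (addlem s i (\<phi>, \<sigma>))"

end

theory Submission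
  imports Defs
begin

lemma finite_fvt[simp]: "finite (fvt t)" by (induction t) auto
lemma finite_fv[simp]: "finite (fv p)" by (induction p) auto

lemma lst: "finite S \<Longrightarrow> set (lst S) = S"
  unfolding lst_def by (metis (mono_tags, lifting) finite_distinct_list someI_ex)

lemma evt_coinc: "(\<forall>c\<in>ct t. M c = M' c) \<Longrightarrow> (\<forall>v\<in>fvt t. e v = e' v) \<Longrightarrow> evt M e t = evt M' e' t"
  by (induction t) auto

lemma evf_coinc: "(\<forall>c\<in>cf p. M c = M' c) \<Longrightarrow> (\<forall>v\<in>fv p. e v = e' v) \<Longrightarrow> evf M e p = evf M' e' p"
proof (induction p arbitrary: e e')
  case (All v p)
  have "\<And>x. evf M (e(v:=x)) p = evf M' (e'(v:=x)) p" using All by (intro All.IH) auto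
  then show ?case by simp
next
  case (Ex v p)
  have "\<And>x. evf M (e(v:=x)) p = evf M' (e'(v:=x)) p" using Ex by (intro Ex.IH) auto
  then show ?case by simp
next
  case (Le a b) then show ?case using evt_coinc[of a M M' e e'] evt_coinc[of b M M' e e'] by simp
next
  case (Lt a b) then show ?case using evt_coinc[of a M M' e e'] evt_coinc[of b M M' e e'] by simp
next
  case (Eq a b) then show ?case using evt_coinc[of a M M' e e'] evt_coinc[of b M M' e e'] by simp
next
  case (Neg p) then show ?case by (metis evf.simps(6) cf.simps(6) fv.simps(6))
next
  case (And p q)
  have "evf M e p = evf M' e' p" using And.prems by (intro And.IH(1)) auto
  moreover have "evf M e q = evf M' e' q" using And.prems by (intro And.IH(2)) auto
  ultimately show ?case by simp
next
  case (Or p q)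
  have "evf M e p = evf M' e' p" using Or.prems by (intro Or.IH(1)) auto
  moreover have "evf M e q = evf M' e' q" using Or.prems by (intro Or.IH(2)) auto
  ultimately show ?case by simp
next
  case (Imp p q)
  have "evf M e p = evf M' e' p" using Imp.prems by (intro Imp.IH(1)) auto
  moreover have "evf M e q = evf M' e' q" using Imp.prems by (intro Imp.IH(2)) auto
  ultimately show ?case by simp
qed simp_all

lemma evt_mapct: "evt M e (mapct f t) = evt (M \<circ> f) e t" by (induction t) auto
lemma evf_mapcf: "evf M e (mapcf f p) = evf (M \<circ> f) e p" by (induction p arbitrary: e) (auto simp: evt_mapct)
lemma cf_mapcf: "cf (mapcf f p) = f ` cf p"
proof -
  have "ct (mapct f t) = f ` ct t" for t by (induction t) auto
  then show ?thesis by (induction p) (auto simp: image_Un)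
qed
lemma fv_mapcf[simp]: "fv (mapcf f p) = fv p"
proof -
  have "fvt (mapct f t) = fvt t" for t by (induction t) auto
  then show ?thesis by (induction p) auto
qed
lemma qfree_mapcf[simp]: "qfree (mapcf f p) = qfree p" by (induction p) auto

lemma evt_replt: "evt M e (replt \<rho> t) = evt (\<lambda>c. case \<rho> c of Some v \<Rightarrow> e v | None \<Rightarrow> M c) e t"
  by (induction t) (auto split: option.split)
lemma evf_replf: "qfree p \<Longrightarrow> evf M e (replf \<rho> p) = evf (\<lambda>c. case \<rho> c of Some v \<Rightarrow> e v | None \<Rightarrow> M c) e p"
  by (induction p) (auto simp: evt_replt)
lemma qfree_replf[simp]: "qfree (replf \<rho> p) = qfree p" by (induction p) auto
lemma ct_replt: "ct (replt \<rho> t) \<subseteq> ct t" by (induction t) (auto split: option.splits)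
lemma cf_replf: "cf (replf \<rho> p) \<subseteq> cf p" using ct_replt by (induction p) fastforce+
lemma fvt_replt: "fvt (replt \<rho> t) \<subseteq> fvt t \<union> {v. \<exists>c\<in>ct t. \<rho> c = Some v}" by (induction t) (auto split: option.splits)
lemma fv_replf: "qfree p \<Longrightarrow> fv (replf \<rho> p) \<subseteq> fv p \<union> {v. \<exists>c\<in>cf p. \<rho> c = Some v}"
  using fvt_replt by (induction p) fastforce+

lemma evt_substt: "evt M e (substt \<sigma> t) = evt M (\<lambda>v. case \<sigma> v of Some u \<Rightarrow> evt M e u | None \<Rightarrow> e v) t"
  by (induction t) (auto split: option.split)
lemma evf_subst: "qfree p \<Longrightarrow> evf M e (subst \<sigma> p) = evf M (\<lambda>v. case \<sigma> v of Some u \<Rightarrow> evt M e u | None \<Rightarrow> e v) p"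
  by (induction p) (auto simp: evt_substt)
lemma qfree_subst[simp]: "qfree (subst \<sigma> p) = qfree p" by (induction p arbitrary: \<sigma>) auto
lemma fvt_substt: "fvt (substt \<sigma> t) = (\<Union>v\<in>fvt t. case \<sigma> v of Some u \<Rightarrow> fvt u | None \<Rightarrow> {v})"
  by (induction t) (auto split: option.splits)
lemma fv_subst: "qfree p \<Longrightarrow> fv (subst \<sigma> p) = (\<Union>v\<in>fv p. case \<sigma> v of Some u \<Rightarrow> fvt u | None \<Rightarrow> {v})"
  by (induction p) (auto simp: fvt_substt)
lemma ct_substt: "ct (substt \<sigma> t) = ct t \<union> (\<Union>v\<in>fvt t. case \<sigma> v of Some u \<Rightarrow> ct u | None \<Rightarrow> {})"
  by (induction t) (auto split: option.splits)
lemma cf_subst: "qfree p \<Longrightarrow> cf (subst \<sigma> p) = cf p \<union> (\<Union>v\<in>fv p. case \<sigma> v of Some u \<Rightarrow> ct u | None \<Rightarrow> {})"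
  by (induction p) (auto simp: ct_substt)
lemma subst_empty[simp]: "subst Map.empty p = p"
proof -
  have "substt Map.empty t = t" for t by (induction t) auto
  then show ?thesis by (induction p) (auto simp: fun_upd_def)
qed

lemma wsE_upd: "wsE e \<Longrightarrow> hassort x (vsort v) \<Longrightarrow> wsE (e(v:=x))"
  unfolding wsE_def by auto

lemma evf_foldr_All: "wsE e \<Longrightarrow> evf M e (foldr All vs p) = (\<forall>e'. wsE e' \<longrightarrow> (\<forall>v. v \<notin> set vs \<longrightarrow> e' v = e v) \<longrightarrow> evf M e' p)"
proof (induction vs arbitrary: e)
  case Nil
  then show ?case by (auto simp: fun_eq_iff[symmetric])
next
  case (Cons v vs)
  show ?case
  proof
    assume L: "evf M e (foldr All (v # vs) p)"
    show "\<forall>e'. wsE e' \<longrightarrow> (\<forall>w. w \<notin> set (v # vs) \<longrightarrow> e' w = e w) \<longrightarrow> evf M e' p"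
    proof (intro allI impI)
      fix e' assume w: "wsE e'" and ag: "\<forall>w. w \<notin> set (v # vs) \<longrightarrow> e' w = e w"
      have hs: "hassort (e' v) (vsort v)" using w unfolding wsE_def by auto
      have "evf M (e(v := e' v)) (foldr All vs p)" using L hs by simp
      then show "evf M e' p" using Cons.IH[OF wsE_upd[OF Cons.prems hs]] w ag by auto
    qed
  next
    assume R: "\<forall>e'. wsE e' \<longrightarrow> (\<forall>w. w \<notin> set (v # vs) \<longrightarrow> e' w = e w) \<longrightarrow> evf M e' p"
    show "evf M e (foldr All (v # vs) p)"
    proof (simp, intro allI impI)
      fix x assume hs: "hassort x (vsort v)"
      have "\<forall>e'. wsE e' \<longrightarrow> (\<forall>w. w \<notin> set vs \<longrightarrow> e' w = (e(v:=x)) w) \<longrightarrow> evf M e' p"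
        using R by auto
      then show "evf M (e(v := x)) (foldr All vs p)"
        using Cons.IH[OF wsE_upd[OF Cons.prems hs]] by blast
    qed
  qed
qed

lemma evf_allc: "wsE e \<Longrightarrow> evf M e (allc p) = (\<forall>e'. wsE e' \<longrightarrow> evf M e' p)"
proof
  assume w: "wsE e" and L: "evf M e (allc p)"
  show "\<forall>e'. wsE e' \<longrightarrow> evf M e' p"
  proof (intro allI impI)
    fix e' assume w': "wsE e'"
    define e'' where "e'' = (\<lambda>v. if v \<in> fv p then e' v else e v)"
    have "wsE e''" using w w' unfolding wsE_def e''_def by auto
    then have "evf M e'' p" using L evf_foldr_All[OF w, of M "lst (fv p)" p] lst[of "fv p"]
      unfolding allc_def e''_def by auto
    then show "evf M e' p" using evf_coinc[of p M M e'' e'] unfolding e''_def by auto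
  qed
next
  assume w: "wsE e" and R: "\<forall>e'. wsE e' \<longrightarrow> evf M e' p"
  then show "evf M e (allc p)" unfolding allc_def using evf_foldr_All[OF w] by auto
qed

lemma cf_allc[simp]: "cf (allc p) = cf p"
proof -
  have "cf (foldr All vs p) = cf p" for vs by (induction vs) auto
  then show ?thesis unfolding allc_def by simp
qed

lemma evf_conjs: assumes "finite S" shows "evf M e (conjs S) = (\<forall>p\<in>S. evf M e p)"
proof -
  have "evf M e (foldr And xs TT) = (\<forall>p\<in>set xs. evf M e p)" for xs by (induction xs) auto
  then show ?thesis unfolding conjs_def using lst[OF assms] by simp
qed
lemma cf_conjs: assumes "finite S" shows "cf (conjs S) = (\<Union>p\<in>S. cf p)"
proof -
  have "cf (foldr And xs TT) = (\<Union>p\<in>set xs. cf p)" for xs by (induction xs) auto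
  then show ?thesis unfolding conjs_def using lst[OF assms] by simp
qed
lemma fv_conjs: assumes "finite S" shows "fv (conjs S) = (\<Union>p\<in>S. fv p)"
proof -
  have "fv (foldr And xs TT) = (\<Union>p\<in>set xs. fv p)" for xs by (induction xs) auto
  then show ?thesis unfolding conjs_def using lst[OF assms] by simp
qed
lemma qfree_conjs: assumes "finite S" shows "qfree (conjs S) = (\<forall>p\<in>S. qfree p)"
proof -
  have "qfree (foldr And xs TT) = (\<forall>p\<in>set xs. qfree p)" for xs by (induction xs) auto
  then show ?thesis unfolding conjs_def using lst[OF assms] by simp
qed

lemma monomial_qfree: "monomial m \<Longrightarrow> qfree m"
proof -
  have "list_all is_literal ls \<Longrightarrow> qfree (foldr And ls TT)" for ls
  proof (induction ls)
    case (Cons a ls)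
    have "is_literal a \<Longrightarrow> qfree a" by (cases a rule: is_literal.cases) (auto elim: is_atom.elims)
    then show ?case using Cons by auto
  qed auto
  then show "monomial m \<Longrightarrow> qfree m" unfolding monomial_def by auto
qed


definition goodsig :: "fm \<Rightarrow> subst \<Rightarrow> bool" where
  "goodsig l \<sigma> \<longleftrightarrow> (\<forall>v\<in>fv l. \<exists>c. \<sigma> v = Some (Cst c) \<and> csort c = vsort v)"

definition holdsQ :: "(cnst \<Rightarrow> val) \<Rightarrow> frame \<Rightarrow> bool" where
  "holdsQ M Q \<longleftrightarrow> (\<forall>(l,\<sigma>)\<in>Q. \<forall>e. wsE e \<longrightarrow> evf M e l)"

lemma holdsQ_mono: "Q \<subseteq> Q' \<Longrightarrow> holdsQ M Q' \<Longrightarrow> holdsQ M Q"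
  unfolding holdsQ_def by blast

lemma substt_replt_inv:
  "substt \<sigma> (replt \<rho> t) = t \<Longrightarrow> v \<in> fvt (replt \<rho> t) \<Longrightarrow> v \<notin> fvt t
   \<Longrightarrow> \<exists>c\<in>ct t. \<rho> c = Some v \<and> \<sigma> v = Some (Cst c)"
  by (induction t) (auto split: option.splits)

lemma subst_replf_inv:
  "qfree p \<Longrightarrow> subst \<sigma> (replf \<rho> p) = p \<Longrightarrow> v \<in> fv (replf \<rho> p) \<Longrightarrow> v \<notin> fv p
   \<Longrightarrow> \<exists>c\<in>cf p. \<rho> c = Some v \<and> \<sigma> v = Some (Cst c)"
  by (induction p) (auto dest: substt_replt_inv)

lemma abs_props:
  assumes g: "fm_ground \<phi>" and a: "is_abs U \<phi> (\<psi>, \<sigma>)"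
  shows "\<exists>\<rho>. qfree \<psi> \<and> cf \<psi> \<subseteq> cf \<phi> \<and> cf \<psi> \<inter> U = {}
     \<and> (\<forall>c\<in>U. vsort (\<rho> c) = csort c) \<and> (\<forall>i. Sk i \<in> U \<longrightarrow> \<rho> (Sk i) = IV i)
     \<and> \<psi> = replf (\<lambda>c. if c \<in> U then Some (\<rho> c) else None) \<phi>
     \<and> (\<forall>v\<in>fv \<psi>. \<exists>c\<in>cf \<phi>. c \<in> U \<and> \<rho> c = v \<and> \<sigma> v = Some (Cst c))"
proof -
  from a obtain \<rho> where r: "\<forall>c\<in>U. vsort (\<rho> c) = csort c \<and> \<rho> c \<notin> fv \<phi>"
    "\<forall>i. Sk i \<in> U \<longrightarrow> \<rho> (Sk i) = IV i"
    "\<psi> = replf (\<lambda>c. if c \<in> U then Some (\<rho> c) else None) \<phi>"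
    and s: "subst \<sigma> \<psi> = \<phi>" "cf \<psi> \<inter> U = {}"
    unfolding is_abs_def by auto
  have q: "qfree \<phi>" "fv \<phi> = {}" using g unfolding fm_ground_def by auto
  have "\<forall>v\<in>fv \<psi>. \<exists>c\<in>cf \<phi>. c \<in> U \<and> \<rho> c = v \<and> \<sigma> v = Some (Cst c)"
  proof
    fix v assume v: "v \<in> fv \<psi>"
    from subst_replf_inv[OF q(1), of \<sigma> "\<lambda>c. if c \<in> U then Some (\<rho> c) else None" v] s r(3) v q(2)
    obtain c where "c \<in> cf \<phi>" "(if c \<in> U then Some (\<rho> c) else None) = Some v" "\<sigma> v = Some (Cst c)"
      by auto
    then show "\<exists>c\<in>cf \<phi>. c \<in> U \<and> \<rho> c = v \<and> \<sigma> v = Some (Cst c)"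
      by (auto split: if_splits)
  qed
  then show ?thesis using r s q cf_replf by (intro exI[of _ \<rho>]) auto
qed

lemma wsM_comp_primec: "wsM M \<Longrightarrow> wsM (M \<circ> primec)"
proof -
  have "csort (primec c) = csort c" for c by (cases c) auto
  then show "wsM M \<Longrightarrow> wsM (M \<circ> primec)" unfolding wsM_def by (metis comp_apply)
qed

lemma qi_ground:
  assumes "finite Q" "\<forall>(l,\<sigma>)\<in>Q. qfree l \<and> goodsig l \<sigma>"
  shows "fm_ground (qi Q)"
proof -
  have "qfree (subst \<sigma> l) \<and> fv (subst \<sigma> l) = {}" if "(l,\<sigma>) \<in> Q" for l \<sigma>
  proof -
    have "qfree l" "goodsig l \<sigma>" using assms that by auto
    then show ?thesis by (auto simp: fv_subst goodsig_def)
  qed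
  then show ?thesis using assms unfolding fm_ground_def qi_def
    by (auto simp: qfree_conjs fv_conjs)
qed

lemma qi_sem:
  assumes "finite Q" "\<forall>(l,\<sigma>)\<in>Q. qfree l \<and> goodsig l \<sigma>" "wsM M" "wsE e" "holdsQ M Q"
  shows "evf M e (qi Q)"
proof -
  have "evf M e (subst \<sigma> l)" if lq: "(l,\<sigma>) \<in> Q" for l \<sigma>
  proof -
    have q: "qfree l" and gs: "goodsig l \<sigma>" using assms lq by auto
    define e1 where "e1 = (\<lambda>v. case \<sigma> v of Some u \<Rightarrow> evt M e u | None \<Rightarrow> e v)"
    define e2 where "e2 = (\<lambda>v. if v \<in> fv l then e1 v else e v)"
    have "wsE e2"
    proof -
      have "hassort (e2 v) (vsort v)" for v
      proof (cases "v \<in> fv l")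
        case True
        then obtain c where "\<sigma> v = Some (Cst c)" "csort c = vsort v" using gs unfolding goodsig_def by auto
        then show ?thesis using True assms(3) unfolding e2_def e1_def wsM_def by (metis evt.simps(2) option.simps(5))
      next
        case False then show ?thesis using assms(4) unfolding e2_def wsE_def by auto
      qed
      then show ?thesis unfolding wsE_def by auto
    qed
    then have "evf M e2 l" using assms(5) lq unfolding holdsQ_def by auto
    then have "evf M e1 l" using evf_coinc[of l M M e2 e1] unfolding e2_def by auto
    then show ?thesis using evf_subst[OF q] unfolding e1_def by auto
  qed
  then show ?thesis unfolding qi_def using assms(1) by (auto simp: evf_conjs)
qed

lemma forallQ_sem:
  assumes "finite Q" "wsE e"
  shows "evf M e (conjs (forallQ Q)) = holdsQ M Q"
  using assms unfolding forallQ_def holdsQ_def by (auto simp: evf_conjs evf_allc)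

lemma cf_forallQ:
  assumes "finite Q"
  shows "cf (conjs (forallQ Q)) = (\<Union>(l,\<sigma>)\<in>Q. cf l)"
  using assms unfolding forallQ_def by (auto simp: cf_conjs)

lemma csort_unprimec[simp]: "csort (unprimec c) = csort c" by (cases c) auto
lemma csort_primec[simp]: "csort (primec c) = csort c" by (cases c) auto

lemma newlemma_sem:
  assumes g: "fm_ground L'" and a: "is_abs SKs (unprime L') (l, \<tau>)"
  shows "evf N e' l = evf (\<lambda>c. case c of Sk i \<Rightarrow> e' (IV i) | _ \<Rightarrow> N (unprimec c)) e' L'"
proof -
  have g': "fm_ground (unprime L')" using g unfolding fm_ground_def unprime_def by simp
  obtain \<rho> where r: "\<forall>i. Sk i \<in> SKs \<longrightarrow> \<rho> (Sk i) = IV i"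
     "l = replf (\<lambda>c. if c \<in> SKs then Some (\<rho> c) else None) (unprime L')"
    using abs_props[OF g' a] by blast
  have q: "qfree (unprime L')" using g' unfolding fm_ground_def by auto
  have "evf N e' l = evf ((\<lambda>c. case (if c \<in> SKs then Some (\<rho> c) else None) of Some v \<Rightarrow> e' v | None \<Rightarrow> N c) \<circ> unprimec) e' L'"
    using evf_replf[OF q] evf_mapcf r(2) unfolding unprime_def by simp
  also have "((\<lambda>c. case (if c \<in> SKs then Some (\<rho> c) else None) of Some v \<Rightarrow> e' v | None \<Rightarrow> N c) \<circ> unprimec)
     = (\<lambda>c. case c of Sk i \<Rightarrow> e' (IV i) | _ \<Rightarrow> N (unprimec c))"
  proof
    fix c show "((\<lambda>c. case (if c \<in> SKs then Some (\<rho> c) else None) of Some v \<Rightarrow> e' v | None \<Rightarrow> N c) \<circ> unprimec) c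
     = (case c of Sk i \<Rightarrow> e' (IV i) | _ \<Rightarrow> N (unprimec c))"
      using r(1) by (cases c) (auto simp: SKs_def)
  qed
  finally show ?thesis .
qed


definition inv :: "cnst set \<Rightarrow> fm \<Rightarrow> fm \<Rightarrow> fm \<Rightarrow> q3state \<Rightarrow> bool" where
 "inv X Init Tr Bad s \<longleftrightarrow>
   (\<forall>j. finite (frm s j)) \<and> (\<forall>j. frm s (Suc j) \<subseteq> frm s j)
 \<and> (\<forall>j l \<sigma>. (l,\<sigma>) \<in> frm s j \<longrightarrow> qfree l \<and> cf l \<subseteq> X \<and> goodsig l \<sigma> \<and> T_valid (Imp Init (allc l)))
 \<and> (\<forall>j l \<sigma> M e. (l,\<sigma>) \<in> frm s (Suc j) \<longrightarrow> wsM M \<longrightarrow> wsE e \<longrightarrow> holdsQ M (frm s j) \<longrightarrow> evf M e Tr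
        \<longrightarrow> (\<forall>e'. wsE e' \<longrightarrow> evf (M \<circ> primec) e' l))
 \<and> (\<forall>j M e. j < lvl s \<longrightarrow> wsM M \<longrightarrow> wsE e \<longrightarrow> holdsQ M (frm s j) \<longrightarrow> \<not> evf M e Bad)
 \<and> (\<forall>m \<sigma> i. (m,\<sigma>,i) \<in> pobs s \<longrightarrow> qfree m \<and> cf m \<subseteq> X \<and> (\<forall>v\<in>fv m. vsort v = SInt) \<and> goodsig m \<sigma>)"

lemma inv_fin: "inv X Init Tr Bad s \<Longrightarrow> finite (frm s j)" unfolding inv_def by simp
lemma inv_mono: "inv X Init Tr Bad s \<Longrightarrow> frm s (Suc j) \<subseteq> frm s j" unfolding inv_def by simp
lemma inv_frm: assumes "inv X Init Tr Bad s" "(l,\<sigma>) \<in> frm s j"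
  shows "qfree l \<and> cf l \<subseteq> X \<and> goodsig l \<sigma> \<and> T_valid (Imp Init (allc l))"
proof -
  have "\<forall>j l \<sigma>. (l,\<sigma>) \<in> frm s j \<longrightarrow> qfree l \<and> cf l \<subseteq> X \<and> goodsig l \<sigma> \<and> T_valid (Imp Init (allc l))"
    using assms(1) unfolding inv_def by (elim conjE) assumption
  then show ?thesis using assms(2) by blast
qed
lemma inv_tr: assumes "inv X Init Tr Bad s" "(l,\<sigma>) \<in> frm s (Suc j)" "wsM M" "wsE e" "holdsQ M (frm s j)" "evf M e Tr"
        "wsE e'" shows "evf (M \<circ> primec) e' l"
proof -
  have "\<forall>j l \<sigma> M e. (l,\<sigma>) \<in> frm s (Suc j) \<longrightarrow> wsM M \<longrightarrow> wsE e \<longrightarrow> holdsQ M (frm s j) \<longrightarrow> evf M e Tr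
        \<longrightarrow> (\<forall>e'. wsE e' \<longrightarrow> evf (M \<circ> primec) e' l)"
    using assms(1) unfolding inv_def by (elim conjE) assumption
  then show ?thesis using assms(2-) by blast
qed
lemma inv_bad: assumes "inv X Init Tr Bad s" "j < lvl s" "wsM M" "wsE e" "holdsQ M (frm s j)" shows "\<not> evf M e Bad"
proof -
  have "\<forall>j M e. j < lvl s \<longrightarrow> wsM M \<longrightarrow> wsE e \<longrightarrow> holdsQ M (frm s j) \<longrightarrow> \<not> evf M e Bad"
    using assms(1) unfolding inv_def by (elim conjE) assumption
  then show ?thesis using assms(2-) by blast
qed
lemma inv_pob: assumes "inv X Init Tr Bad s" "(m,\<sigma>,i) \<in> pobs s"
  shows "qfree m \<and> cf m \<subseteq> X \<and> (\<forall>v\<in>fv m. vsort v = SInt) \<and> goodsig m \<sigma>"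
proof -
  have "\<forall>m \<sigma> i. (m,\<sigma>,i) \<in> pobs s \<longrightarrow> qfree m \<and> cf m \<subseteq> X \<and> (\<forall>v\<in>fv m. vsort v = SInt) \<and> goodsig m \<sigma>"
    using assms(1) unfolding inv_def by (elim conjE) assumption
  then show ?thesis using assms(2-) by blast
qed
lemma inv_frm_all: "inv X Init Tr Bad s \<Longrightarrow> \<forall>(l,\<sigma>)\<in>frm s j. qfree l \<and> goodsig l \<sigma>"
  using inv_frm by blast

lemma frm_addlem: "frm (addlem s i x) j = (if j \<le> Suc i then insert x (frm s j) else frm s j)"
  unfolding addlem_def by simp
lemma lvl_addlem[simp]: "lvl (addlem s i x) = lvl s" unfolding addlem_def by simp
lemma pobs_addlem[simp]: "pobs (addlem s i x) = pobs s" unfolding addlem_def by simp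
lemma stat_addlem[simp]: "stat (addlem s i x) = stat s" unfolding addlem_def by simp

lemma frm_chain: "inv X Init Tr Bad s \<Longrightarrow> j \<le> i \<Longrightarrow> frm s i \<subseteq> frm s j"
proof -
  assume "inv X Init Tr Bad s" "j \<le> i"
  then show ?thesis unfolding inv_def using lift_Suc_antimono_le[of "frm s" j i] by blast
qed

lemma inv_addlem:
  assumes I: "inv X Init Tr Bad s" and x: "x = (l, \<sigma>)"
    and n1: "qfree l" "cf l \<subseteq> X" "goodsig l \<sigma>" "T_valid (Imp Init (allc l))"
    and n2: "\<forall>j M e. j \<le> i \<longrightarrow> wsM M \<longrightarrow> wsE e \<longrightarrow> holdsQ M (insert x (frm s j)) \<longrightarrow> evf M e Tr
               \<longrightarrow> (\<forall>e'. wsE e' \<longrightarrow> evf (M \<circ> primec) e' l)"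
  shows "inv X Init Tr Bad (addlem s i x)"
proof -
  have sub: "frm s j \<subseteq> frm (addlem s i x) j" for j by (auto simp: frm_addlem)
  show ?thesis
    unfolding inv_def
  proof (intro conjI)
    show "\<forall>j. finite (frm (addlem s i x) j)" using I unfolding inv_def by (auto simp: frm_addlem)
    show "\<forall>j. frm (addlem s i x) (Suc j) \<subseteq> frm (addlem s i x) j" using I unfolding inv_def
      by (auto simp: frm_addlem)
    show "\<forall>j l \<sigma>. (l, \<sigma>) \<in> frm (addlem s i x) j \<longrightarrow> qfree l \<and> cf l \<subseteq> X \<and> goodsig l \<sigma> \<and> T_valid (Imp Init (allc l))"
      using I n1 x unfolding inv_def by (auto simp: frm_addlem split: if_splits)
    show "\<forall>j l' \<sigma>' M e. (l', \<sigma>') \<in> frm (addlem s i x) (Suc j) \<longrightarrow> wsM M \<longrightarrow> wsE e \<longrightarrow> holdsQ M (frm (addlem s i x) j)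
         \<longrightarrow> evf M e Tr \<longrightarrow> (\<forall>e'. wsE e' \<longrightarrow> evf (M \<circ> primec) e' l')"
    proof (intro allI impI)
      fix j l' \<sigma>' M e e'
      assume a: "(l', \<sigma>') \<in> frm (addlem s i x) (Suc j)" "wsM M" "wsE e" "holdsQ M (frm (addlem s i x) j)"
        "evf M e Tr" "wsE e'"
      have h: "holdsQ M (frm s j)" using holdsQ_mono[OF sub a(4)] .
      show "evf (M \<circ> primec) e' l'"
      proof (cases "(l', \<sigma>') \<in> frm s (Suc j)")
        case True then show ?thesis using I a h unfolding inv_def by blast
      next
        case False
        then have "x = (l', \<sigma>')" "j \<le> i" using a(1) by (auto simp: frm_addlem split: if_splits)
        then show ?thesis using n2 a x by (auto simp: frm_addlem)
      qed
    qed
    show "\<forall>j M e. j < lvl (addlem s i x) \<longrightarrow> wsM M \<longrightarrow> wsE e \<longrightarrow> holdsQ M (frm (addlem s i x) j) \<longrightarrow> \<not> evf M e Bad"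
      using I holdsQ_mono[OF sub] unfolding inv_def by auto
    show "\<forall>m \<sigma> i'. (m, \<sigma>, i') \<in> pobs (addlem s i x) \<longrightarrow> qfree m \<and> cf m \<subseteq> X \<and> (\<forall>v\<in>fv m. vsort v = SInt) \<and> goodsig m \<sigma>"
      using I unfolding inv_def by simp
  qed
qed

lemma inv_init:
  assumes "safety_problem X Init Tr Bad"
  shows "inv X Init Tr Bad (q3init Init)"
proof -
  have g: "qfree Init" "fv Init = {}" "cf Init \<subseteq> X"
    using assms unfolding safety_problem_def fm_ground_def by auto
  have tv: "T_valid (Imp Init (allc Init))"
    unfolding T_valid_def using g(2) evf_coinc[of Init _ _ _ _] by (auto simp: evf_allc) (metis empty_iff)
  show ?thesis unfolding inv_def q3init_def using g tv by (auto simp: goodsig_def)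
qed


lemma vsort_SInt: "vsort v = SInt \<Longrightarrow> \<exists>j. v = IV j" by (cases v) auto

lemma msk_props:
  assumes q: "qfree m" and fvm: "\<forall>v\<in>fv m. vsort v = SInt" and cm: "cf m \<subseteq> X"
    and X: "\<forall>c\<in>X. \<exists>s n. c = Cn s n"
  shows "fm_ground (msk m)" "cf (msk m) \<subseteq> primec ` X \<union> SKs"
    "\<And>i. Sk i \<in> cf (msk m) \<Longrightarrow> IV i \<in> fv m"
proof -
  have qp: "qfree (prime m)" using q unfolding prime_def by simp
  have fvp: "fv (prime m) = fv m" unfolding prime_def by simp
  have cfp: "cf (prime m) = primec ` cf m" unfolding prime_def by (simp add: cf_mapcf)
  have skv: "v \<in> fv m \<Longrightarrow> \<exists>j. v = IV j \<and> sk v = Some (Cst (Sk j))" for v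
    using fvm vsort_SInt unfolding sk_def by fastforce
  show "fm_ground (msk m)" unfolding fm_ground_def msk_def
    using qp fvp skv by (auto simp: fv_subst) (metis empty_iff fvt.simps(2) option.simps(5))
  have cfm: "cf (msk m) = primec ` cf m \<union> (\<Union>v\<in>fv m. case sk v of Some u \<Rightarrow> ct u | None \<Rightarrow> {})"
    unfolding msk_def using cf_subst[OF qp] fvp cfp by simp
  show "cf (msk m) \<subseteq> primec ` X \<union> SKs"
  proof
    fix c assume "c \<in> cf (msk m)"
    then consider "c \<in> primec ` cf m" | v where "v \<in> fv m" "c \<in> (case sk v of Some u \<Rightarrow> ct u | None \<Rightarrow> {})"
      using cfm by auto
    then show "c \<in> primec ` X \<union> SKs"
    proof cases
      case 1 then show ?thesis using cm by auto
    next
      case 2 then show ?thesis using skv[OF 2(1)] by (auto simp: SKs_def)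
    qed
  qed
  fix i assume "Sk i \<in> cf (msk m)"
  then consider "Sk i \<in> primec ` cf m" | v where "v \<in> fv m" "Sk i \<in> (case sk v of Some u \<Rightarrow> ct u | None \<Rightarrow> {})"
    using cfm by auto
  then show "IV i \<in> fv m"
  proof cases
    case 1
    then obtain c where "c \<in> X" "Sk i = primec c" using cm by auto
    then show ?thesis using X by auto
  next
    case 2 then show ?thesis using skv[OF 2(1)] by auto
  qed
qed


lemma inv_newlemma:
  assumes sp: "safety_problem X Init Tr Bad" and ab: "abs_spec absf" and it: "itp_spec itp"
    and I: "inv X Init Tr Bad s"
    and pob: "(m, \<sigma>, Suc i) \<in> pobs s"
    and un: "T_unsat (And (Ftr Init Tr (qi (frm s i))) (msk m))"
    and L: "itp (Ftr Init Tr (qi (frm s i))) (msk m) = Some L'"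
    and la: "absf SKs (unprime L') = (l, \<tau>)"
  shows "inv X Init Tr Bad (addlem s i (l, \<sigma>))"
proof -
  define A where "A = Ftr Init Tr (qi (frm s i))"
  define B where "B = msk m"
  have X: "\<forall>c\<in>X. \<exists>s n. c = Cn s n" and gI: "fm_ground Init" "cf Init \<subseteq> X"
    and gT: "fm_ground Tr" "cf Tr \<subseteq> X \<union> primec ` X"
    using sp unfolding safety_problem_def by auto
  have fin: "finite (frm s i)" and fr: "\<forall>(l,\<sigma>)\<in>frm s i. qfree l \<and> goodsig l \<sigma>"
    using inv_fin[OF I] inv_frm_all[OF I] by auto
  have pm: "qfree m" "cf m \<subseteq> X" "\<forall>v\<in>fv m. vsort v = SInt" "goodsig m \<sigma>"
    using inv_pob[OF I pob] by auto
  note mp = msk_props[OF pm(1) pm(3) pm(2) X]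
  have gA: "fm_ground A" using qi_ground[OF fin fr] gI gT unfolding A_def Ftr_def fm_ground_def prime_def
    by simp
  have gB: "fm_ground B" using mp unfolding B_def by simp
  have "case itp A B of None \<Rightarrow> True
      | Some I \<Rightarrow> fm_ground I \<and> wff I \<and> cf I \<subseteq> cf A \<inter> cf B
                 \<and> T_valid (Imp A I) \<and> T_valid (Imp I (Neg B))"
    using it gA gB un unfolding itp_spec_def A_def B_def by blast
  then have Lp: "fm_ground L'" "cf L' \<subseteq> cf A \<inter> cf B" "T_valid (Imp A L')"
    using L unfolding A_def B_def by simp_all
  have gL: "fm_ground (unprime L')" using Lp(1) unfolding fm_ground_def unprime_def by simp
  have "is_abs SKs (unprime L') (absf SKs (unprime L'))" using ab gL unfolding abs_spec_def by blast
  then have isa: "is_abs SKs (unprime L') (l, \<tau>)" using la by simp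
  obtain \<rho> where r: "qfree l" "cf l \<subseteq> cf (unprime L')" "cf l \<inter> SKs = {}"
    "\<forall>i. Sk i \<in> SKs \<longrightarrow> \<rho> (Sk i) = IV i"
    "\<forall>v\<in>fv l. \<exists>c\<in>cf (unprime L'). c \<in> SKs \<and> \<rho> c = v"
    using abs_props[OF gL isa] by blast
  have cfL: "cf L' \<subseteq> primec ` X \<union> SKs" using Lp(2) mp(2) unfolding B_def by auto
  have cfuL: "cf (unprime L') = unprimec ` cf L'" unfolding unprime_def by (simp add: cf_mapcf)
  have n1: "cf l \<subseteq> X"
  proof
    fix c assume c: "c \<in> cf l"
    then obtain c0 where c0: "c0 \<in> cf L'" "c = unprimec c0" using r(2) cfuL by auto
    then consider x where "x \<in> X" "c0 = primec x" | "c0 \<in> SKs" using cfL by auto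
    then show "c \<in> X"
    proof cases
      case 1 then show ?thesis using X c0 by auto
    next
      case 2 then show ?thesis using c c0 r(3) by (auto simp: SKs_def)
    qed
  qed
  have n2: "goodsig l \<sigma>" unfolding goodsig_def
  proof
    fix v assume v: "v \<in> fv l"
    then obtain c where c: "c \<in> cf (unprime L')" "c \<in> SKs" "\<rho> c = v" using r(5) by blast
    then obtain k where k: "c = Sk k" unfolding SKs_def by auto
    then have "v = IV k" using r(4) c by auto
    obtain c0 where "c0 \<in> cf L'" "unprimec c0 = Sk k" using c k cfuL by auto
    then have "Sk k \<in> cf L'" by (cases c0) auto
    then have "IV k \<in> fv m" using mp(3) Lp(2) unfolding B_def by auto
    then show "\<exists>c. \<sigma> v = Some (Cst c) \<and> csort c = vsort v" using pm(4) \<open>v = IV k\<close> unfolding goodsig_def by auto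
  qed
  have sem: "\<And>N e'. evf N e' l = evf (\<lambda>c. case c of Sk i \<Rightarrow> e' (IV i) | _ \<Rightarrow> N (unprimec c)) e' L'"
    using newlemma_sem[OF Lp(1) isa] by blast
  have wsK: "wsM (\<lambda>c. case c of Sk i \<Rightarrow> e' (IV i) | _ \<Rightarrow> N (unprimec c))" if wN: "wsM N" and we: "wsE e'" for N e'
    unfolding wsM_def
  proof
    fix c show "hassort (case c of Sk i \<Rightarrow> e' (IV i) | _ \<Rightarrow> N (unprimec c)) (csort c)"
    proof (cases c)
      case (Cn s n) then show ?thesis using wN unfolding wsM_def by (metis cnst.simps(10) csort_unprimec)
    next
      case (Pr s n) then show ?thesis using wN unfolding wsM_def by (metis cnst.simps(11) csort_unprimec)
    next
      case (Sk k) then show ?thesis using we unfolding wsE_def by (metis cnst.simps(12) csort.simps(3) vsort.simps(1))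
    qed
  qed
  have n3: "T_valid (Imp Init (allc l))"
    unfolding T_valid_def evf.simps
  proof (intro allI impI)
    fix M e assume M: "wsM M" "wsE e" "evf M e Init"
    show "evf M e (allc l)" unfolding evf_allc[OF M(2)]
    proof (intro allI impI)
      fix e' assume e': "wsE e'"
      define K where "K = (\<lambda>c. case c of Sk i \<Rightarrow> e' (IV i) | _ \<Rightarrow> M (unprimec c))"
      have wK: "wsM K" using wsK[OF M(1) e'] unfolding K_def .
      have "\<forall>c\<in>cf Init. (K \<circ> primec) c = M c"
      proof
        fix c assume "c \<in> cf Init"
        then obtain s n where "c = Cn s n" using gI X by blast
        then show "(K \<circ> primec) c = M c" by (simp add: K_def)
      qed
      then have "evf (K \<circ> primec) e' Init = evf M e Init"
        using gI unfolding fm_ground_def by (intro evf_coinc) auto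
      then have "evf K e' A" using M unfolding A_def Ftr_def prime_def by (simp add: evf_mapcf)
      then have "evf K e' L'" using Lp(3) wK e' unfolding T_valid_def by auto
      then show "evf M e' l" using sem unfolding K_def by simp
    qed
  qed
  have n4: "\<forall>j M e. j \<le> i \<longrightarrow> wsM M \<longrightarrow> wsE e \<longrightarrow> holdsQ M (insert (l, \<sigma>) (frm s j)) \<longrightarrow> evf M e Tr
               \<longrightarrow> (\<forall>e'. wsE e' \<longrightarrow> evf (M \<circ> primec) e' l)"
  proof (intro allI impI)
    fix j M e e' assume a: "j \<le> i" "wsM M" "wsE e" "holdsQ M (insert (l, \<sigma>) (frm s j))" "evf M e Tr" "wsE e'"
    define M4 where "M4 = (\<lambda>c. case c of Sk i \<Rightarrow> e' (IV i) | _ \<Rightarrow> M c)"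
    have wM4: "wsM M4" unfolding wsM_def
    proof
      fix c show "hassort (M4 c) (csort c)"
      proof (cases c)
        case (Cn s n) then show ?thesis using a(2) unfolding wsM_def M4_def by (metis cnst.simps(10))
      next
        case (Pr s n) then show ?thesis using a(2) unfolding wsM_def M4_def by (metis cnst.simps(11))
      next
        case (Sk k) then show ?thesis using a(6) unfolding wsE_def M4_def by (metis cnst.simps(12) csort.simps(3) vsort.simps(1))
      qed
    qed
    have agX: "\<forall>c\<in>X. M4 c = M c"
    proof
      fix c assume "c \<in> X" then obtain s n where "c = Cn s n" using X by blast
      then show "M4 c = M c" by (simp add: M4_def)
    qed
    have "holdsQ M (frm s i)" using holdsQ_mono[OF _ a(4)] frm_chain[OF I a(1)] by blast
    then have "holdsQ M4 (frm s i)" unfolding holdsQ_def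
    proof (auto)
      fix l0 \<sigma>0 e0 assume "\<forall>x\<in>frm s i. case x of (l, \<sigma>) \<Rightarrow> \<forall>e. wsE e \<longrightarrow> evf M e l" "(l0, \<sigma>0) \<in> frm s i" "wsE e0"
      moreover have "cf l0 \<subseteq> X" using inv_frm[OF I \<open>(l0, \<sigma>0) \<in> frm s i\<close>] by blast
      ultimately show "evf M4 e0 l0" using evf_coinc[of l0 M4 M e0 e0] agX by auto
    qed
    then have q: "evf M4 e (qi (frm s i))" using qi_sem[OF fin fr wM4 a(3)] by blast
    have "\<forall>c\<in>cf Tr. M4 c = M c"
    proof
      fix c assume "c \<in> cf Tr"
      then consider "c \<in> X" | x where "x \<in> X" "c = primec x" using gT by blast
      then show "M4 c = M c"
      proof cases
        case 1 then show ?thesis using agX by blast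
      next
        case 2 then obtain s n where "x = Cn s n" using X by blast
        then show ?thesis using 2 by (simp add: M4_def)
      qed
    qed
    then have "evf M4 e Tr = evf M e Tr" using gT unfolding fm_ground_def
      by (intro evf_coinc) auto
    then have "evf M4 e A" using q a(5) unfolding A_def Ftr_def by simp
    then have LM4: "evf M4 e L'" using Lp(3) wM4 a(3) unfolding T_valid_def by auto
    have "evf (\<lambda>c. case c of Sk i \<Rightarrow> e' (IV i) | _ \<Rightarrow> (M \<circ> primec) (unprimec c)) e' L' = evf M4 e L'"
    proof (intro evf_coinc)
      show "\<forall>v\<in>fv L'. e' v = e v" using Lp(1) unfolding fm_ground_def by simp
      show "\<forall>c\<in>cf L'. (case c of Sk i \<Rightarrow> e' (IV i) | _ \<Rightarrow> (M \<circ> primec) (unprimec c)) = M4 c"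
      proof
        fix c assume "c \<in> cf L'"
        then consider x where "x \<in> X" "c = primec x" | "c \<in> SKs" using cfL by auto
        then show "(case c of Sk i \<Rightarrow> e' (IV i) | _ \<Rightarrow> (M \<circ> primec) (unprimec c)) = M4 c"
        proof cases
          case 1 then show ?thesis using X by (auto simp: M4_def)
        next
          case 2 then show ?thesis by (auto simp: M4_def SKs_def)
        qed
      qed
    qed
    then show "evf (M \<circ> primec) e' l" using sem LM4 by simp
  qed
  show ?thesis by (rule inv_addlem[OF I refl r(1) n1 n2 n3 n4])
qed


lemma inv_push:
  assumes I: "inv X Init Tr Bad s"
    and o: "(Or \<phi> \<psi>, \<sigma>) \<in> frm s i"
    and ti: "T_valid (Imp Init (allc \<phi>))"
    and tt: "T_valid (Imp (And (allc \<phi>) (And (conjs (forallQ (frm s i))) (And (qi (frm s i)) Tr)))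
                        (prime (allc \<phi>)))"
  shows "inv X Init Tr Bad (addlem s i (\<phi>, \<sigma>))"
proof -
  have fo: "qfree (Or \<phi> \<psi>)" "cf (Or \<phi> \<psi>) \<subseteq> X" "goodsig (Or \<phi> \<psi>) \<sigma>" using inv_frm[OF I o] by auto
  have n1: "qfree \<phi>" "cf \<phi> \<subseteq> X" "goodsig \<phi> \<sigma>" using fo unfolding goodsig_def by auto
  have fin: "finite (frm s i)" and fr: "\<forall>(l,\<sigma>)\<in>frm s i. qfree l \<and> goodsig l \<sigma>"
    using inv_fin[OF I] inv_frm_all[OF I] by auto
  have n4: "\<forall>j M e. j \<le> i \<longrightarrow> wsM M \<longrightarrow> wsE e \<longrightarrow> holdsQ M (insert (\<phi>, \<sigma>) (frm s j)) \<longrightarrow> evf M e Tr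
               \<longrightarrow> (\<forall>e'. wsE e' \<longrightarrow> evf (M \<circ> primec) e' \<phi>)"
  proof (intro allI impI)
    fix j M e e' assume a: "j \<le> i" "wsM M" "wsE e" "holdsQ M (insert (\<phi>, \<sigma>) (frm s j))" "evf M e Tr" "wsE e'"
    have h: "holdsQ M (frm s i)" using holdsQ_mono[OF _ a(4)] frm_chain[OF I a(1)] by blast
    have 1: "evf M e (allc \<phi>)" using a(4) unfolding evf_allc[OF a(3)] holdsQ_def by auto
    have 2: "evf M e (conjs (forallQ (frm s i)))" using forallQ_sem[OF fin a(3)] h by simp
    have 3: "evf M e (qi (frm s i))" using qi_sem[OF fin fr a(2) a(3) h] .
    have "evf M e (prime (allc \<phi>))" using tt a(2,3,5) 1 2 3 unfolding T_valid_def by auto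
    then have "evf (M \<circ> primec) e (allc \<phi>)" unfolding prime_def by (simp add: evf_mapcf)
    then show "evf (M \<circ> primec) e' \<phi>" using evf_allc[OF a(3)] a(6) by blast
  qed
  show ?thesis by (rule inv_addlem[OF I refl n1 ti n4])
qed

lemma inv_pobs_upd:
  assumes "inv X Init Tr Bad s" "qfree m" "cf m \<subseteq> X" "\<forall>v\<in>fv m. vsort v = SInt" "goodsig m \<sigma>"
  shows "inv X Init Tr Bad (s\<lparr>pobs := insert (m, \<sigma>, i) (pobs s)\<rparr>)"
  using assms unfolding inv_def by auto

lemma inv_pred:
  assumes sp: "safety_problem X Init Tr Bad" and ab: "abs_spec absf" and pm: "pmbp_spec absf pmbp"
    and I: "inv X Init Tr Bad s"
    and pob: "(m, \<xi>, Suc i) \<in> pobs s" and M: "wsM M"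
    and mo: "T_models M (And (qi (frm s i)) (And Tr (msk m)))"
    and pr: "pmbp (primec ` X \<union> SKs) (And Tr (msk m)) M = Some (\<phi>, W)"
    and af: "absf W \<phi> = (\<psi>, \<sigma>)"
  shows "inv X Init Tr Bad (s\<lparr>pobs := insert (\<psi>, \<sigma>, i) (pobs s)\<rparr>)"
proof -
  define U where "U = primec ` X \<union> SKs"
  have X: "\<forall>c\<in>X. \<exists>s n. c = Cn s n" and gT: "fm_ground Tr" "cf Tr \<subseteq> X \<union> primec ` X"
    using sp unfolding safety_problem_def by auto
  have pmm: "qfree m" "cf m \<subseteq> X" "\<forall>v\<in>fv m. vsort v = SInt"
    using inv_pob[OF I pob] by auto
  note mp = msk_props[OF pmm(1) pmm(3) pmm(2) X]
  have g: "fm_ground (And Tr (msk m))" using gT mp(1) unfolding fm_ground_def by simp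
  have mo2: "T_models M (And Tr (msk m))" using mo unfolding T_models_def by simp
  have "case pmbp U (And Tr (msk m)) M of None \<Rightarrow> True
         | Some (\<psi>, W) \<Rightarrow> monomial \<psi> \<and> fm_ground \<psi> \<and> wff \<psi> \<and> W \<subseteq> U
             \<and> cf \<psi> \<subseteq> cf (And Tr (msk m)) - (U - W)
             \<and> T_valid (Imp \<psi> (exq absf (U - W) (And Tr (msk m))))
             \<and> T_models M \<psi> \<and> (\<forall>c\<in>W. csort c = SInt)"
    using pm g M mo2 unfolding pmbp_spec_def by blast
  then have P: "fm_ground \<phi>" "W \<subseteq> U" "cf \<phi> \<subseteq> cf (And Tr (msk m)) - (U - W)" "\<forall>c\<in>W. csort c = SInt"
    using pr unfolding U_def by simp_all
  have "is_abs W \<phi> (absf W \<phi>)" using ab P(1) unfolding abs_spec_def by blast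
  then have isa: "is_abs W \<phi> (\<psi>, \<sigma>)" using af by simp
  obtain \<rho> where r: "qfree \<psi>" "cf \<psi> \<subseteq> cf \<phi>" "cf \<psi> \<inter> W = {}"
     "\<forall>c\<in>W. vsort (\<rho> c) = csort c"
     "\<forall>v\<in>fv \<psi>. \<exists>c\<in>cf \<phi>. c \<in> W \<and> \<rho> c = v \<and> \<sigma> v = Some (Cst c)"
    using abs_props[OF P(1) isa] by blast
  have c1: "cf \<psi> \<subseteq> X"
  proof
    fix c assume c: "c \<in> cf \<psi>"
    then have "c \<in> cf \<phi>" "c \<notin> W" using r(2,3) by auto
    then have "c \<in> cf Tr \<union> cf (msk m)" "c \<notin> U" using P(3) by auto
    then show "c \<in> X" using gT(2) mp(2) unfolding U_def by auto
  qed
  have c2: "\<forall>v\<in>fv \<psi>. vsort v = SInt" using r(4,5) P(4) by fastforce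
  have c3: "goodsig \<psi> \<sigma>" unfolding goodsig_def using r(4,5) by fastforce
  show ?thesis using inv_pobs_upd[OF I r(1) c1 c2 c3] .
qed

lemma inv_step:
  assumes sp: "safety_problem X Init Tr Bad" and ab: "abs_spec absf" and pm: "pmbp_spec absf pmbp"
    and it: "itp_spec itp"
    and st: "q3step X Init Tr Bad absf pmbp itp s s'" and I: "inv X Init Tr Bad s"
  shows "inv X Init Tr Bad s'"
  using st
proof cases
  case (Safe i) then show ?thesis using I unfolding inv_def by simp
next
  case (Cex m \<sigma>) then show ?thesis using I unfolding inv_def by simp
next
  case Unfold
  have fin: "finite (frm s (lvl s))" and fr: "\<forall>(l,\<sigma>)\<in>frm s (lvl s). qfree l \<and> goodsig l \<sigma>"
    using inv_fin[OF I] inv_frm_all[OF I] by auto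
  have new: "\<forall>M e. wsM M \<longrightarrow> wsE e \<longrightarrow> holdsQ M (frm s (lvl s)) \<longrightarrow> \<not> evf M e Bad"
  proof (intro allI impI)
    fix M e assume a: "wsM M" "wsE e" "holdsQ M (frm s (lvl s))"
    have "evf M e (qi (frm s (lvl s)))" using qi_sem[OF fin fr a] .
    then show "\<not> evf M e Bad" using Unfold(3) a unfolding T_valid_def by auto
  qed
  have "\<forall>j M e. j < Suc (lvl s) \<longrightarrow> wsM M \<longrightarrow> wsE e \<longrightarrow> holdsQ M (frm s j) \<longrightarrow> \<not> evf M e Bad"
    using new inv_bad[OF I] by (metis less_Suc_eq)
  then show ?thesis using I Unfold(1) unfolding inv_def by simp
next
  case (Candidate m)
  have "monomial m" "cf m \<subseteq> X" "\<forall>v\<in>fv m. vsort v = SInt" "fm_ground m"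
    using Candidate(3) unfolding is_pob_def by auto
  then have "qfree m" "cf m \<subseteq> X" "\<forall>v\<in>fv m. vsort v = SInt" "goodsig m Map.empty"
    using monomial_qfree unfolding fm_ground_def goodsig_def by auto
  then show ?thesis using inv_pobs_upd[OF I] Candidate(1) by simp
next
  case (Predecessor m \<xi> i M \<phi> W \<psi> \<sigma>)
  then show ?thesis using inv_pred[OF sp ab pm I] by simp
next
  case (NewLemma i m \<sigma> L' l \<tau>)
  then show ?thesis using inv_newlemma[OF sp ab it I] by simp
next
  case (Push i \<phi> \<psi> \<sigma>)
  then show ?thesis using inv_push[OF I] by simp
qed

theorem lemma4:
  fixes X :: "cnst set" and Init Tr Bad :: fm
    and absf :: "cnst set \<Rightarrow> fm \<Rightarrow> fm \<times> subst"
    and pmbp :: "cnst set \<Rightarrow> fm \<Rightarrow> (cnst \<Rightarrow> val) \<Rightarrow> (fm \<times> cnst set) option"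
    and itp :: "fm \<Rightarrow> fm \<Rightarrow> fm option"
    and s :: q3state and k :: nat
  assumes "safety_problem X Init Tr Bad"
    and "abs_spec absf"
    and "pmbp_spec absf pmbp"
    and "itp_spec itp"
    and "(q3step X Init Tr Bad absf pmbp itp)\<^sup>*\<^sup>* (q3init Init) s"
    and "1 \<le> k" and "k < lvl s"
  shows "interp_seq X Init Tr Bad k (\<lambda>j. conjs (forallQ (frm s j)))"
proof -
  have I: "inv X Init Tr Bad s" using assms(5)
  proof (induction rule: rtranclp_induct)
    case base then show ?case using inv_init[OF assms(1)] .
  next
    case (step y z) then show ?case using inv_step[OF assms(1-4)] by blast
  qed
  have fin: "\<And>j. finite (frm s j)" using inv_fin[OF I] .
  have g1: "\<forall>j\<in>{1..k}. cf (conjs (forallQ (frm s j))) \<subseteq> X"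
    using inv_frm[OF I] by (auto simp: cf_forallQ[OF fin])
  have g2: "T_valid (Imp Init (conjs (forallQ (frm s 1))))"
    unfolding T_valid_def evf.simps
  proof (intro allI impI)
    fix M e assume a: "wsM M" "wsE e" "evf M e Init"
    show "evf M e (conjs (forallQ (frm s 1)))" unfolding forallQ_sem[OF fin a(2)] holdsQ_def
    proof (clarify)
      fix l \<sigma> e' assume "(l, \<sigma>) \<in> frm s 1" "wsE e'"
      then have "T_valid (Imp Init (allc l))" using inv_frm[OF I] by blast
      then have "evf M e (allc l)" using a unfolding T_valid_def by auto
      then show "evf M e' l" using evf_allc[OF a(2)] \<open>wsE e'\<close> by blast
    qed
  qed
  have g3: "\<forall>j. 1 \<le> j \<and> j \<le> k - 1 \<longrightarrow> T_valid (Imp (And (conjs (forallQ (frm s j))) Tr) (prime (conjs (forallQ (frm s (Suc j))))))"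
  proof (intro allI impI)
    fix j
    show "T_valid (Imp (And (conjs (forallQ (frm s j))) Tr) (prime (conjs (forallQ (frm s (Suc j))))))"
      unfolding T_valid_def evf.simps
    proof (intro allI impI)
      fix M e assume a: "wsM M" "wsE e" "evf M e (conjs (forallQ (frm s j))) \<and> evf M e Tr"
      have h: "holdsQ M (frm s j)" using a forallQ_sem[OF fin a(2)] by simp
      have "holdsQ (M \<circ> primec) (frm s (Suc j))" unfolding holdsQ_def
        using inv_tr[OF I _ a(1) a(2) h] a(3) by blast
      then show "evf M e (prime (conjs (forallQ (frm s (Suc j)))))"
        unfolding prime_def evf_mapcf using forallQ_sem[OF fin a(2)] by simp
    qed
  qed
  have g4: "T_valid (Imp (conjs (forallQ (frm s k))) (Neg Bad))"
    unfolding T_valid_def evf.simps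
  proof (intro allI impI)
    fix M e assume a: "wsM M" "wsE e" "evf M e (conjs (forallQ (frm s k)))"
    then show "\<not> evf M e Bad" using inv_bad[OF I assms(7) a(1,2)] forallQ_sem[OF fin a(2)] by simp
  qed
  show ?thesis unfolding interp_seq_def using g1 g2 g3 g4 by blast
qed

end
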